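(* Let $L$ be a positive definite lattice with $\operatorname{rank} L\geq 4$ and let $\mathcal{A}_{a,m}$ be an admissible arithmetic progression. If $\mathcal{A}_{a,m}\subseteq Q(\operatorname{gen} L)$, then $\mathcal{A}_{a,m}\cap Q(L)\neq\emptyset$.
   Context: A lattice is a finitely generated $\mathbb{Z}$-submodule $L$ of a finite-dimensional quadratic space $(V,Q)$ over $\mathbb{Q}$, with associated symmetric bilinear form $B$ satisfying $Q(v)=B(v,v)$; it is assumed throughout that the scale of $L$ (the fractional ideal generated by $\{B(x,y):x,y\in L\}$) equals $\mathbb{Z}$. $L$ is positive definite if $Q(v)>0$ for all nonzero $v\in L$. $Q(L)=\{Q(v):v\in L\}$. For a prime $p$, $L_p=\mathbb{Z}_p\otimes L$. $\operatorname{gen}L$ is the genus of $L$ and $Q(\operatorname{gen}L)=\{a\in\mathbb{Z}: a\in Q(K)\text{ for some }K\in\operatorname{gen}L\}$, equivalently the set of integers $a$ with $a\in Q(L_p)$ for all primes $p$. For positive integers $a<m$, $\mathcal{A}_{a,m}=\{a+mx : x\in\mathbb{Z},\ x\geq 0\}$, and $\mathcal{A}_{a,m}$ is admissible if $\operatorname{ord}_p a<\operatorname{ord}_p m$ for every prime $p\mid m$. *)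

theory Defs
  imports Main "HOL-Computational_Algebra.Primes"
begin

text \<open>A lattice of rank n is modelled by its Gram matrix G (w.r.t. a Z-basis),
  entries G i j = B(e_i, e_j) for i, j < n. Vectors are coordinate functions
  nat \<Rightarrow> int (only coordinates < n matter).\<close>

definition qform :: "nat \<Rightarrow> (nat \<Rightarrow> nat \<Rightarrow> int) \<Rightarrow> (nat \<Rightarrow> int) \<Rightarrow> int" where
  "qform n G x = (\<Sum>i<n. \<Sum>j<n. G i j * x i * x j)"

definition sym_gram :: "nat \<Rightarrow> (nat \<Rightarrow> nat \<Rightarrow> int) \<Rightarrow> bool" where
  "sym_gram n G \<longleftrightarrow> (\<forall>i<n. \<forall>j<n. G i j = G j i)"

definition pos_def :: "nat \<Rightarrow> (nat \<Rightarrow> nat \<Rightarrow> int) \<Rightarrow> bool" where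
  "pos_def n G \<longleftrightarrow> (\<forall>x. (\<exists>i<n. x i \<noteq> 0) \<longrightarrow> qform n G x > 0)"

text \<open>Scale of L equals Z: the ideal generated by all B(x,y) (equivalently by the
  Gram entries) is Z.\<close>
definition scale_one :: "nat \<Rightarrow> (nat \<Rightarrow> nat \<Rightarrow> int) \<Rightarrow> bool" where
  "scale_one n G \<longleftrightarrow> Gcd {G i j | i j. i < n \<and> j < n} = 1"

definition QL :: "nat \<Rightarrow> (nat \<Rightarrow> nat \<Rightarrow> int) \<Rightarrow> int set" where
  "QL n G = {qform n G x | x. True}"

text \<open>p-adic integers as the inverse limit of Z/p^k: a coherent sequence of integers
  z with z (k+1) \<equiv> z k (mod p^k); z k is the residue modulo p^k.
  A vector in L_p = Z_p \<otimes> L is given by coherent sequences in each coordinate,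
  X k i being the level-k residue of coordinate i.\<close>
definition padic_coherent :: "int \<Rightarrow> (nat \<Rightarrow> int) \<Rightarrow> bool" where
  "padic_coherent p z \<longleftrightarrow> (\<forall>k. z (Suc k) mod p ^ k = z k mod p ^ k)"

text \<open>a \<in> Q(L_p): some vector of L_p has Q-value a, i.e. Q(X) = a in Z_p,
  i.e. Q(X k) \<equiv> a (mod p^k) for all k.\<close>
definition in_QLp :: "nat \<Rightarrow> (nat \<Rightarrow> nat \<Rightarrow> int) \<Rightarrow> int \<Rightarrow> int \<Rightarrow> bool" where
  "in_QLp n G p a \<longleftrightarrow>
     (\<exists>X :: nat \<Rightarrow> nat \<Rightarrow> int.
        (\<forall>i<n. padic_coherent p (\<lambda>k. X k i)) \<and>
        (\<forall>k. qform n G (X k) mod p ^ k = a mod p ^ k))"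

text \<open>Q(gen L) = integers represented by L_p for every prime p.\<close>
definition QgenL :: "nat \<Rightarrow> (nat \<Rightarrow> nat \<Rightarrow> int) \<Rightarrow> int set" where
  "QgenL n G = {a. \<forall>p. prime p \<longrightarrow> in_QLp n G p a}"

definition AP :: "int \<Rightarrow> int \<Rightarrow> int set" where
  "AP a m = {a + m * x | x. x \<ge> 0}"

definition admissible :: "int \<Rightarrow> int \<Rightarrow> bool" where
  "admissible a m \<longleftrightarrow> 0 < a \<and> a < m \<and>
     (\<forall>p::int. prime p \<longrightarrow> p dvd m \<longrightarrow> multiplicity p a < multiplicity p m)"

end

theory Submission
  imports Defs "HOL-Number_Theory.Number_Theory"
begin

lemma qform_cong:
  assumes "\<And>i. i < n \<Longrightarrow> [x i = y i] (mod M)"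
  shows "[qform n G x = qform n G y] (mod M)"
  unfolding qform_def
  by (intro cong_sum cong_mult cong_refl) (auto intro: assms)

lemma combine:
  fixes M1 M2 :: int
  assumes "coprime M1 M2" "[qform n G u = a] (mod M1)" "[qform n G v = a] (mod M2)"
  shows "\<exists>x. [qform n G x = a] (mod M1 * M2)"
proof -
  obtain s t where st0: "s * M1 + t * M2 = gcd M1 M2"
    using bezout_int by blast
  have st: "s * M1 + t * M2 = 1" using st0 assms(1) by simp
  define x where "x = (\<lambda>i. u i * (t * M2) + v i * (s * M1))"
  have "[x i = u i] (mod M1)" for i
  proof -
    have "[x i = u i * (t * M2) + v i * 0] (mod M1)"
      unfolding x_def by (intro cong_add cong_mult cong_refl) (simp add: cong_0_iff)
    moreover have "[t * M2 = 1] (mod M1)" using st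
    proof -
      have "t * M2 = 1 + (- s) * M1" using st by simp
      thus ?thesis unfolding cong_def by (simp only: mod_mult_self1)
    qed
    hence "[u i * (t * M2) = u i * 1] (mod M1)" by (intro cong_mult cong_refl)
    ultimately show ?thesis by (simp add: cong_trans)
  qed
  hence 1: "[qform n G x = a] (mod M1)"
    using qform_cong assms(2) cong_trans by blast
  have "[x i = v i] (mod M2)" for i
  proof -
    have "[x i = u i * 0 + v i * (s * M1)] (mod M2)"
      unfolding x_def by (intro cong_add cong_mult cong_refl) (simp add: cong_0_iff)
    moreover have "[s * M1 = 1] (mod M2)" using st
    proof -
      have "s * M1 = 1 + (- t) * M2" using st by simp
      thus ?thesis unfolding cong_def by (simp only: mod_mult_self1)
    qed
    hence "[v i * (s * M1) = v i * 1] (mod M2)" by (intro cong_mult cong_refl)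
    ultimately show ?thesis by (simp add: cong_trans)
  qed
  hence 2: "[qform n G x = a] (mod M2)"
    using qform_cong assms(3) cong_trans by blast
  from 1 2 assms(1) have "[qform n G x = a] (mod M1 * M2)"
    using coprime_cong_mult by blast
  thus ?thesis by blast
qed

lemma local_all:
  fixes M :: int
  assumes H: "\<And>p k. prime p \<Longrightarrow> \<exists>x. [qform n G x = a] (mod p ^ k)"
  shows "M > 0 \<Longrightarrow> \<exists>x. [qform n G x = a] (mod M)"
proof (induction "nat M" arbitrary: M rule: less_induct)
  case less
  show ?case
  proof (cases "M = 1")
    case True thus ?thesis by auto
  next
    case False
    have nu: "\<not> is_unit M" using False less.prems by auto
    have M0: "M \<noteq> 0" using less.prems by simp
    obtain p where p: "prime p" "p dvd M"
      using prime_divisor_exists[OF M0 nu] by blast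
    have pu: "\<not> is_unit p" by (rule prime_elem_not_unit[OF prime_imp_prime_elem[OF p(1)]])
    obtain y where y: "M = p ^ multiplicity p M * y" "\<not> p dvd y"
      by (rule multiplicity_decompose'[of M p]) (rule M0, rule pu)
    define k where "k = multiplicity p M"
    have "k \<noteq> 0"
    proof
      assume "k = 0"
      hence "M = y" using y(1) unfolding k_def by simp
      thus False using p(2) y(2) by simp
    qed
    have p2: "p \<ge> 2" using p(1) by (simp add: prime_ge_2_int)
    have "p \<le> p ^ k" using \<open>k \<noteq> 0\<close> p2 by (intro self_le_power) auto
    hence pk: "p ^ k \<ge> 2" using p2 by linarith
    have Mk: "M = p ^ k * y" using y(1) unfolding k_def .
    have ypos: "y > 0"
    proof -
      have "0 < p ^ k * y" using less.prems Mk by simp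
      thus ?thesis using pk p2 by (simp add: zero_less_mult_iff)
    qed
    have "1 * y < p ^ k * y" using pk ypos by (intro mult_strict_right_mono) auto
    hence "y < M" using Mk by simp
    then obtain v where v: "[qform n G v = a] (mod y)" using less.hyps ypos by force
    obtain u where u: "[qform n G u = a] (mod p ^ k)" using H p(1) by blast
    have cop: "coprime (p ^ k) y" using p y(2)
      by (simp add: prime_imp_coprime)
    show ?thesis using combine[OF cop u v] Mk by simp
  qed
qed

theorem lemma1:
  fixes n :: nat and G :: "nat \<Rightarrow> nat \<Rightarrow> int" and a m :: int
  assumes "sym_gram n G" and "pos_def n G" and "scale_one n G"
    and "n \<ge> 4"
    and "admissible a m"
    and "AP a m \<subseteq> QgenL n G"
  shows "AP a m \<inter> QL n G \<noteq> {}"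
proof -
  have am: "0 < a" "a < m" using assms(5) unfolding admissible_def by auto
  have "a \<in> AP a m" unfolding AP_def by (auto intro: exI[of _ 0])
  hence aq: "a \<in> QgenL n G" using assms(6) by blast
  have H: "\<exists>x. [qform n G x = a] (mod p ^ k)" if "prime p" for p k
  proof -
    from aq that obtain X where "\<forall>k. qform n G (X k) mod p ^ k = a mod p ^ k"
      unfolding QgenL_def in_QLp_def by blast
    thus ?thesis unfolding cong_def by blast
  qed
  obtain x where x: "[qform n G x = a] (mod m)"
    using local_all[of n G a m] H am by force
  define z where "z = (\<lambda>i. x i + m * (if i = 0 then (if x 0 = 0 then 1 else 0) else 0))"
  have zc: "[z i = x i] (mod m)" for i
    unfolding z_def by (simp add: cong_def)
  have "z 0 \<noteq> 0" unfolding z_def using am by auto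
  hence "qform n G z > 0" using assms(2,4) unfolding pos_def_def by force
  have "[qform n G z = qform n G x] (mod m)" by (rule qform_cong) (rule zc)
  hence "[qform n G z = a] (mod m)" using x cong_trans by blast
  then obtain k where k: "qform n G z = a + m * k"
    using cong_iff_lin[of a "qform n G z" m] cong_sym by blast
  have "k \<ge> 0"
  proof (rule ccontr)
    assume "\<not> k \<ge> 0"
    hence "k \<le> -1" by simp
    hence "m * k \<le> m * (-1)" using am by (intro mult_left_mono) auto
    thus False using k \<open>qform n G z > 0\<close> am by linarith
  qed
  hence "qform n G z \<in> AP a m" unfolding AP_def using k by blast
  moreover have "qform n G z \<in> QL n G" unfolding QL_def by blast
  ultimately show ?thesis by blast
qed

end
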